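(* Let $A=(A,\oplus,\odot)$ be a skew brace, and $D$ a cyclic characteristic subgroup of $A_{\oplus}$ such that $D\leq Z\left(A_{\oplus}^{(n)}\right)$ for some positive integer $n$. Then there exists a positive integer $m$ such that $A_{\odot}^{(m+n)}\leq C_{A_{\oplus}}(D)$.
   Context: A skew brace is a set $A$ with two binary operations $\oplus,\odot$ such that $A_{\oplus}=(A,\oplus)$ and $A_{\odot}=(A,\odot)$ are groups and $a\odot(b\oplus c)=(a\odot b)\ominus a\oplus(a\odot c)$ for all $a,b,c\in A$, where $\ominus a$ is the inverse of $a$ in $A_{\oplus}$. The derived series of a group $G$ is indexed by $G^{(1)}=G$, $G^{(i+1)}=[G^{(i)},G^{(i)}]$; $Z(G)$ denotes the center and $C_G(H)$ the centralizer of $H$ in $G$. *)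

theory Defs
  imports "HOL-Algebra.Algebra"
begin

text \<open>A skew brace: two group structures on the same carrier, the additive group P
  (operation written \<oplus> in the paper) and the multiplicative group M (\<odot>), such that
  a \<odot> (b \<oplus> c) = (a \<odot> b) \<ominus> a \<oplus> (a \<odot> c).\<close>
definition skew_brace :: "'a monoid \<Rightarrow> 'a monoid \<Rightarrow> bool" where
  "skew_brace P M \<longleftrightarrow> group P \<and> group M \<and> carrier P = carrier M \<and>
     (\<forall>a\<in>carrier P. \<forall>b\<in>carrier P. \<forall>c\<in>carrier P.
        a \<otimes>\<^bsub>M\<^esub> (b \<otimes>\<^bsub>P\<^esub> c) =
        (a \<otimes>\<^bsub>M\<^esub> b) \<otimes>\<^bsub>P\<^esub> inv\<^bsub>P\<^esub> a \<otimes>\<^bsub>P\<^esub> (a \<otimes>\<^bsub>M\<^esub> c))"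

text \<open>Derived series indexed from 1: G^(1) = G, G^(i+1) = [G^(i), G^(i)].\<close>
definition derived_series :: "('a, 'b) monoid_scheme \<Rightarrow> nat \<Rightarrow> 'a set" where
  "derived_series G i = (derived G ^^ (i - 1)) (carrier G)"

definition group_center :: "('a, 'b) monoid_scheme \<Rightarrow> 'a set" where
  "group_center G = {z \<in> carrier G. \<forall>g\<in>carrier G. z \<otimes>\<^bsub>G\<^esub> g = g \<otimes>\<^bsub>G\<^esub> z}"

definition centralizer :: "('a, 'b) monoid_scheme \<Rightarrow> 'a set \<Rightarrow> 'a set" where
  "centralizer G H = {g \<in> carrier G. \<forall>h\<in>H. g \<otimes>\<^bsub>G\<^esub> h = h \<otimes>\<^bsub>G\<^esub> g}"

definition characteristic_subgroup :: "'a set \<Rightarrow> ('a, 'b) monoid_scheme \<Rightarrow> bool" where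
  "characteristic_subgroup D G \<longleftrightarrow> subgroup D G \<and> (\<forall>\<phi>\<in>auto G. \<phi> ` D \<subseteq> D)"

end

theory Submission
  imports Defs
begin

lemma endo_cyclic_commute:
  assumes gH: "group H" and cyc: "cyclic_group H"
    and f: "f \<in> hom H H" and g: "g \<in> hom H H" and d: "d \<in> carrier H"
  shows "f (g d) = g (f d)"
proof -
  interpret H: group H by (rule gH)
  obtain x where x: "x \<in> carrier H" and cx: "carrier H = range (\<lambda>n::int. x [^]\<^bsub>H\<^esub> n)"
    using cyc H.cyclic_group by blast
  have fx: "f x \<in> carrier H" using f x by (auto simp: hom_def)
  have gx: "g x \<in> carrier H" using g x by (auto simp: hom_def)
  obtain k :: int where k: "f x = x [^]\<^bsub>H\<^esub> k" using fx cx by auto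
  obtain l :: int where l: "g x = x [^]\<^bsub>H\<^esub> l" using gx cx by auto
  obtain j :: int where j: "d = x [^]\<^bsub>H\<^esub> j" using d cx by auto
  have fp: "f (x [^]\<^bsub>H\<^esub> (i::int)) = x [^]\<^bsub>H\<^esub> (k * i)" for i
    using hom_int_pow[OF f x gH gH, of i] k H.int_pow_pow[OF x] by simp
  have gp: "g (x [^]\<^bsub>H\<^esub> (i::int)) = x [^]\<^bsub>H\<^esub> (l * i)" for i
    using hom_int_pow[OF g x gH gH, of i] l H.int_pow_pow[OF x] by simp
  show ?thesis using fp gp j by (simp add: mult.left_commute)
qed

lemma act_kernel:
  fixes P M :: "'a monoid"
  assumes gM: "group M" and gP: "group P" and ch: "characteristic_subgroup D P"
    and cyc: "cyclic_group (P\<lparr>carrier := D\<rparr>)"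
    and hm: "\<And>a. a \<in> carrier M \<Longrightarrow> \<Phi> a \<in> hom P P"
    and comp: "\<And>a b x. a \<in> carrier M \<Longrightarrow> b \<in> carrier M \<Longrightarrow> x \<in> carrier P \<Longrightarrow>
                 \<Phi> (a \<otimes>\<^bsub>M\<^esub> b) x = \<Phi> a (\<Phi> b x)"
    and one: "\<And>x. x \<in> carrier P \<Longrightarrow> \<Phi> \<one>\<^bsub>M\<^esub> x = x"
  shows "derived M (carrier M) \<subseteq> {a \<in> carrier M. \<forall>d\<in>D. \<Phi> a d = d}"
proof -
  interpret M: group M by (rule gM)
  interpret P: group P by (rule gP)
  have sD: "subgroup D P" using ch by (simp add: characteristic_subgroup_def)
  have DP: "D \<subseteq> carrier P" using sD subgroup.subset by blast
  have cl: "\<Phi> a x \<in> carrier P" if "a \<in> carrier M" "x \<in> carrier P" for a x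
    using hm[OF that(1)] that(2) by (auto simp: hom_def)
  have au: "restrict (\<Phi> a) (carrier P) \<in> auto P" if a: "a \<in> carrier M" for a
  proof -
    have "restrict (\<Phi> a) (carrier P) \<in> hom P P"
      using hm[OF a] by (auto simp: hom_def)
    moreover have "bij_betw (restrict (\<Phi> a) (carrier P)) (carrier P) (carrier P)"
    proof (rule bij_betw_byWitness[where f'="\<Phi> (inv\<^bsub>M\<^esub> a)"])
      show "\<forall>x\<in>carrier P. \<Phi> (inv\<^bsub>M\<^esub> a) (restrict (\<Phi> a) (carrier P) x) = x"
        using comp[of "inv\<^bsub>M\<^esub> a" a] a one by simp
      show "\<forall>y\<in>carrier P. restrict (\<Phi> a) (carrier P) (\<Phi> (inv\<^bsub>M\<^esub> a) y) = y"
        using comp[of a "inv\<^bsub>M\<^esub> a"] a one cl by simp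
      show "restrict (\<Phi> a) (carrier P) ` carrier P \<subseteq> carrier P" using cl a by auto
      show "\<Phi> (inv\<^bsub>M\<^esub> a) ` carrier P \<subseteq> carrier P" using cl a by auto
    qed
    ultimately show ?thesis by (simp add: auto_def Bij_def)
  qed
  have inD: "\<Phi> a d \<in> D" if "a \<in> carrier M" "d \<in> D" for a d
    using au[OF that(1)] ch that(2) DP unfolding characteristic_subgroup_def by force
  let ?H = "P\<lparr>carrier := D\<rparr>"
  have gH: "group ?H" using sD P.subgroup_imp_group by blast
  have hH: "\<Phi> a \<in> hom ?H ?H" if "a \<in> carrier M" for a
    using hm[OF that] inD[OF that] DP by (auto simp: hom_def subset_iff)
  have com: "\<Phi> a (\<Phi> b d) = \<Phi> b (\<Phi> a d)" if "a \<in> carrier M" "b \<in> carrier M" "d \<in> D" for a b d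
    using endo_cyclic_commute[OF gH cyc hH[OF that(1)] hH[OF that(2)]] that(3) by simp
  define K where "K = {a \<in> carrier M. \<forall>d\<in>D. \<Phi> a d = d}"
  have sK: "subgroup K M"
  proof (rule M.subgroupI)
    show "K \<subseteq> carrier M" by (auto simp: K_def)
    show "K \<noteq> {}" using one DP by (auto simp: K_def)
    fix a assume a: "a \<in> K"
    show "inv\<^bsub>M\<^esub> a \<in> K"
      unfolding K_def
    proof (intro CollectI conjI ballI)
      show "inv\<^bsub>M\<^esub> a \<in> carrier M" using a by (auto simp: K_def)
      fix d assume d: "d \<in> D"
      have "\<Phi> (inv\<^bsub>M\<^esub> a) d = \<Phi> (inv\<^bsub>M\<^esub> a) (\<Phi> a d)" using a d by (auto simp: K_def)
      also have "\<dots> = d" using comp[of "inv\<^bsub>M\<^esub> a" a d] a d DP one by (auto simp: K_def)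
      finally show "\<Phi> (inv\<^bsub>M\<^esub> a) d = d" .
    qed
  next
    fix a b assume a: "a \<in> K" and b: "b \<in> K"
    then show "a \<otimes>\<^bsub>M\<^esub> b \<in> K" using comp DP by (auto simp: K_def subset_iff)
  qed
  have "derived_set M (carrier M) \<subseteq> K"
  proof
    fix c assume "c \<in> derived_set M (carrier M)"
    then obtain x y where x: "x \<in> carrier M" and y: "y \<in> carrier M"
      and c: "c = x \<otimes>\<^bsub>M\<^esub> y \<otimes>\<^bsub>M\<^esub> inv\<^bsub>M\<^esub> x \<otimes>\<^bsub>M\<^esub> inv\<^bsub>M\<^esub> y"
      by auto
    have "\<Phi> c d = d" if d: "d \<in> D" for d
    proof -
      have dP: "d \<in> carrier P" using d DP by auto
      have e: "\<Phi> (inv\<^bsub>M\<^esub> y) d \<in> D" using inD d y by auto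
      have "\<Phi> c d = \<Phi> x (\<Phi> y (\<Phi> (inv\<^bsub>M\<^esub> x) (\<Phi> (inv\<^bsub>M\<^esub> y) d)))"
        using c x y dP comp cl by simp
      also have "\<dots> = \<Phi> x (\<Phi> (inv\<^bsub>M\<^esub> x) (\<Phi> y (\<Phi> (inv\<^bsub>M\<^esub> y) d)))"
        using com[OF y _ e, of "inv\<^bsub>M\<^esub> x"] x by simp
      also have "\<dots> = d"
        using comp[of y "inv\<^bsub>M\<^esub> y" d] comp[of x "inv\<^bsub>M\<^esub> x"] one x y dP by simp
      finally show ?thesis .
    qed
    moreover have "c \<in> carrier M" using c x y by simp
    ultimately show "c \<in> K" by (auto simp: K_def)
  qed
  then show ?thesis unfolding derived_def K_def[symmetric]
    using M.generate_subgroup_incl sK by blast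
qed

lemma (in group) canc1: "x \<in> carrier G \<Longrightarrow> y \<in> carrier G \<Longrightarrow> inv x \<otimes> (x \<otimes> y) = y"
  by (simp add: m_assoc[symmetric])

lemma (in group) canc2: "x \<in> carrier G \<Longrightarrow> y \<in> carrier G \<Longrightarrow> x \<otimes> (inv x \<otimes> y) = y"
  by (simp add: m_assoc[symmetric])

lemma group_idem_one:
  assumes "group G" "x \<in> carrier G" "x \<otimes>\<^bsub>G\<^esub> x = x"
  shows "x = \<one>\<^bsub>G\<^esub>"
  proof -
  interpret G: group G by (rule assms(1))
  have "x \<otimes>\<^bsub>G\<^esub> x = x \<otimes>\<^bsub>G\<^esub> \<one>\<^bsub>G\<^esub>" using assms by simp
  then show ?thesis using assms(2) by (simp del: G.r_one)
qed

theorem corollary4p5: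
  fixes P M :: "'a monoid" and D :: "'a set" and n :: nat
  assumes "skew_brace P M"
    and "characteristic_subgroup D P"
    and "cyclic_group (P\<lparr>carrier := D\<rparr>)"
    and "n > 0"
    and "D \<subseteq> group_center (P\<lparr>carrier := derived_series P n\<rparr>)"
  shows "\<exists>m::nat. m > 0 \<and> derived_series M (m + n) \<subseteq> centralizer P D"
proof -
  have gP: "group P" and gM: "group M" and cPM: "carrier P = carrier M"
    and br: "\<And>a b c. a \<in> carrier P \<Longrightarrow> b \<in> carrier P \<Longrightarrow> c \<in> carrier P \<Longrightarrow>
        a \<otimes>\<^bsub>M\<^esub> (b \<otimes>\<^bsub>P\<^esub> c) =
        (a \<otimes>\<^bsub>M\<^esub> b) \<otimes>\<^bsub>P\<^esub> inv\<^bsub>P\<^esub> a \<otimes>\<^bsub>P\<^esub> (a \<otimes>\<^bsub>M\<^esub> c)"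
    using assms(1) unfolding skew_brace_def by blast+
  interpret P: group P by (rule gP)
  interpret M: group M by (rule gM)
  have sD: "subgroup D P" using assms(2) by (simp add: characteristic_subgroup_def)
  have DP: "D \<subseteq> carrier P" using sD subgroup.subset by blast
  have mc: "a \<otimes>\<^bsub>M\<^esub> b \<in> carrier P" if "a \<in> carrier P" "b \<in> carrier P" for a b
    using that cPM by simp
  have z: "\<one>\<^bsub>P\<^esub> \<otimes>\<^bsub>M\<^esub> \<one>\<^bsub>P\<^esub> = \<one>\<^bsub>P\<^esub>"
  proof -
    let ?z = "\<one>\<^bsub>P\<^esub> \<otimes>\<^bsub>M\<^esub> \<one>\<^bsub>P\<^esub>"
    have "?z = ?z \<otimes>\<^bsub>P\<^esub> ?z" using br[of "\<one>\<^bsub>P\<^esub>" "\<one>\<^bsub>P\<^esub>" "\<one>\<^bsub>P\<^esub>"] mc by simp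
    then show ?thesis using group_idem_one[OF gP, of ?z] mc by simp
  qed
  have one: "\<one>\<^bsub>P\<^esub> = \<one>\<^bsub>M\<^esub>"
    using group_idem_one[OF gM, of "\<one>\<^bsub>P\<^esub>"] z cPM P.one_closed by simp
  have minv: "a \<otimes>\<^bsub>M\<^esub> inv\<^bsub>P\<^esub> b = a \<otimes>\<^bsub>P\<^esub> inv\<^bsub>P\<^esub> (a \<otimes>\<^bsub>M\<^esub> b) \<otimes>\<^bsub>P\<^esub> a"
    if a: "a \<in> carrier P" and b: "b \<in> carrier P" for a b
  proof -
    let ?X = "a \<otimes>\<^bsub>M\<^esub> b" and ?Y = "a \<otimes>\<^bsub>M\<^esub> inv\<^bsub>P\<^esub> b"
    have X: "?X \<in> carrier P" and Y: "?Y \<in> carrier P" using mc a b by auto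
    have "a = ?X \<otimes>\<^bsub>P\<^esub> inv\<^bsub>P\<^esub> a \<otimes>\<^bsub>P\<^esub> ?Y"
      using br[of a b "inv\<^bsub>P\<^esub> b"] a b one cPM P.inv_closed[OF b] by simp
    then have "a \<otimes>\<^bsub>P\<^esub> inv\<^bsub>P\<^esub> ?X \<otimes>\<^bsub>P\<^esub> a
        = a \<otimes>\<^bsub>P\<^esub> inv\<^bsub>P\<^esub> ?X \<otimes>\<^bsub>P\<^esub> (?X \<otimes>\<^bsub>P\<^esub> inv\<^bsub>P\<^esub> a \<otimes>\<^bsub>P\<^esub> ?Y)"
      by simp
    also have "\<dots> = ?Y" using X Y a by (simp add: P.m_assoc P.canc1 P.canc2)
    finally show ?thesis by simp
  qed
  define L where "L = (\<lambda>a x. inv\<^bsub>P\<^esub> a \<otimes>\<^bsub>P\<^esub> (a \<otimes>\<^bsub>M\<^esub> x))"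
  define G where "G = (\<lambda>a x. (a \<otimes>\<^bsub>M\<^esub> x) \<otimes>\<^bsub>P\<^esub> inv\<^bsub>P\<^esub> a)"
  have kL: "derived M (carrier M) \<subseteq> {a \<in> carrier M. \<forall>d\<in>D. L a d = d}"
  proof (rule act_kernel[OF gM gP assms(2) assms(3)])
    fix a assume a: "a \<in> carrier M"
    have aP: "a \<in> carrier P" using a cPM by simp
    show "L a \<in> hom P P"
      unfolding hom_def L_def
    proof (intro CollectI conjI ballI)
      show "(\<lambda>x. inv\<^bsub>P\<^esub> a \<otimes>\<^bsub>P\<^esub> (a \<otimes>\<^bsub>M\<^esub> x)) \<in> carrier P \<rightarrow> carrier P"
        using a cPM by auto
      fix x y assume x: "x \<in> carrier P" and y: "y \<in> carrier P"
      show "inv\<^bsub>P\<^esub> a \<otimes>\<^bsub>P\<^esub> (a \<otimes>\<^bsub>M\<^esub> (x \<otimes>\<^bsub>P\<^esub> y)) =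
          inv\<^bsub>P\<^esub> a \<otimes>\<^bsub>P\<^esub> (a \<otimes>\<^bsub>M\<^esub> x) \<otimes>\<^bsub>P\<^esub> (inv\<^bsub>P\<^esub> a \<otimes>\<^bsub>P\<^esub> (a \<otimes>\<^bsub>M\<^esub> y))"
        using br[of a x y] x y mc[of a x] mc[of a y] aP P.inv_closed[OF aP] by (simp add: P.m_assoc P.canc1 P.canc2)
    qed
  next
    fix a b x assume a: "a \<in> carrier M" and b: "b \<in> carrier M" and x: "x \<in> carrier P"
    have aP: "a \<in> carrier P" and bP: "b \<in> carrier P" using a b cPM by auto
    have "L a (L b x) = inv\<^bsub>P\<^esub> a \<otimes>\<^bsub>P\<^esub> ((a \<otimes>\<^bsub>M\<^esub> inv\<^bsub>P\<^esub> b) \<otimes>\<^bsub>P\<^esub> inv\<^bsub>P\<^esub> a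
        \<otimes>\<^bsub>P\<^esub> (a \<otimes>\<^bsub>M\<^esub> (b \<otimes>\<^bsub>M\<^esub> x)))"
      unfolding L_def using br[of a "inv\<^bsub>P\<^esub> b" "b \<otimes>\<^bsub>M\<^esub> x"] aP bP x mc by simp
    also have "\<dots> = inv\<^bsub>P\<^esub> (a \<otimes>\<^bsub>M\<^esub> b) \<otimes>\<^bsub>P\<^esub> (a \<otimes>\<^bsub>M\<^esub> (b \<otimes>\<^bsub>M\<^esub> x))"
      using minv[OF aP bP] aP bP x mc by (simp add: P.m_assoc P.canc1 P.canc2)
    also have "\<dots> = L (a \<otimes>\<^bsub>M\<^esub> b) x"
      unfolding L_def using a b x cPM by (simp add: M.m_assoc)
    finally show "L (a \<otimes>\<^bsub>M\<^esub> b) x = L a (L b x)" by simp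
  next
    fix x assume x: "x \<in> carrier P"
    have "\<one>\<^bsub>M\<^esub> \<otimes>\<^bsub>M\<^esub> x = x" using x cPM by simp
    then show "L \<one>\<^bsub>M\<^esub> x = x" unfolding L_def using x by (simp add: one[symmetric])
  qed
  have kG: "derived M (carrier M) \<subseteq> {a \<in> carrier M. \<forall>d\<in>D. G a d = d}"
  proof (rule act_kernel[OF gM gP assms(2) assms(3)])
    fix a assume a: "a \<in> carrier M"
    have aP: "a \<in> carrier P" using a cPM by simp
    show "G a \<in> hom P P"
      unfolding hom_def G_def
    proof (intro CollectI conjI ballI)
      show "(\<lambda>x. (a \<otimes>\<^bsub>M\<^esub> x) \<otimes>\<^bsub>P\<^esub> inv\<^bsub>P\<^esub> a) \<in> carrier P \<rightarrow> carrier P"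
        using a cPM by auto
      fix x y assume x: "x \<in> carrier P" and y: "y \<in> carrier P"
      show "(a \<otimes>\<^bsub>M\<^esub> (x \<otimes>\<^bsub>P\<^esub> y)) \<otimes>\<^bsub>P\<^esub> inv\<^bsub>P\<^esub> a =
          (a \<otimes>\<^bsub>M\<^esub> x) \<otimes>\<^bsub>P\<^esub> inv\<^bsub>P\<^esub> a \<otimes>\<^bsub>P\<^esub> ((a \<otimes>\<^bsub>M\<^esub> y) \<otimes>\<^bsub>P\<^esub> inv\<^bsub>P\<^esub> a)"
        using br[of a x y] x y mc[of a x] mc[of a y] aP P.inv_closed[OF aP] by (simp add: P.m_assoc P.canc1 P.canc2)
    qed
  next
    fix a b x assume a: "a \<in> carrier M" and b: "b \<in> carrier M" and x: "x \<in> carrier P"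
    have aP: "a \<in> carrier P" and bP: "b \<in> carrier P" using a b cPM by auto
    have "G a (G b x) = (a \<otimes>\<^bsub>M\<^esub> (b \<otimes>\<^bsub>M\<^esub> x)) \<otimes>\<^bsub>P\<^esub> inv\<^bsub>P\<^esub> a
        \<otimes>\<^bsub>P\<^esub> (a \<otimes>\<^bsub>M\<^esub> inv\<^bsub>P\<^esub> b) \<otimes>\<^bsub>P\<^esub> inv\<^bsub>P\<^esub> a"
      unfolding G_def using br[of a "b \<otimes>\<^bsub>M\<^esub> x" "inv\<^bsub>P\<^esub> b"] aP bP x mc by simp
    also have "\<dots> = (a \<otimes>\<^bsub>M\<^esub> (b \<otimes>\<^bsub>M\<^esub> x)) \<otimes>\<^bsub>P\<^esub> inv\<^bsub>P\<^esub> (a \<otimes>\<^bsub>M\<^esub> b)"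
      using minv[OF aP bP] aP bP x mc by (simp add: P.m_assoc P.canc1 P.canc2)
    also have "\<dots> = G (a \<otimes>\<^bsub>M\<^esub> b) x"
      unfolding G_def using a b x cPM by (simp add: M.m_assoc)
    finally show "G (a \<otimes>\<^bsub>M\<^esub> b) x = G a (G b x)" by simp
  next
    fix x assume x: "x \<in> carrier P"
    have "\<one>\<^bsub>M\<^esub> \<otimes>\<^bsub>M\<^esub> x = x" using x cPM by simp
    then show "G \<one>\<^bsub>M\<^esub> x = x" unfolding G_def using x by (simp add: one[symmetric])
  qed
  have key: "derived M (carrier M) \<subseteq> centralizer P D"
  proof
    fix a assume a: "a \<in> derived M (carrier M)"
    then have aM: "a \<in> carrier M" and l: "\<forall>d\<in>D. L a d = d" and g: "\<forall>d\<in>D. G a d = d"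
      using kL kG by auto
    have aP: "a \<in> carrier P" using aM cPM by simp
    have "a \<otimes>\<^bsub>P\<^esub> d = d \<otimes>\<^bsub>P\<^esub> a" if d: "d \<in> D" for d
    proof -
      have dP: "d \<in> carrier P" using d DP by auto
      have e1: "a \<otimes>\<^bsub>M\<^esub> d = a \<otimes>\<^bsub>P\<^esub> d"
        using l d unfolding L_def using P.inv_solve_left'[of d a "a \<otimes>\<^bsub>M\<^esub> d"] aP dP mc by auto
      have "(a \<otimes>\<^bsub>M\<^esub> d) = d \<otimes>\<^bsub>P\<^esub> a"
        using g d unfolding G_def using P.inv_solve_right'[of d "a \<otimes>\<^bsub>M\<^esub> d" a] aP dP mc by auto
      then show ?thesis using e1 by simp
    qed
    then show "a \<in> centralizer P D" using aP by (simp add: centralizer_def)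
  qed
  obtain k where nk: "n = Suc k" using assms(4) by (cases n) auto
  have "derived_series M (1 + n) = derived M ((derived M ^^ k) (carrier M))"
    by (simp add: derived_series_def nk)
  also have "\<dots> \<subseteq> derived M (carrier M)"
    using M.mono_derived M.exp_of_derived_in_carrier by blast
  finally show ?thesis using key by (intro exI[of _ 1]) auto
qed

end
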